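(* Let $M\in\mathrm{SO}(2n,2n-1)$ be totally positive (all minors of $M$ in the standard basis are strictly positive). Then the middle diagonal entry satisfies $M_{2n,2n}\ge 1$.
   Context: $\mathrm{SO}(2n,2n-1)$ is the group of determinant-one real $(4n-1)\times(4n-1)$ matrices $M$ with $M^TJM=J$, where $J$ is the antidiagonal matrix with $J_{i,4n-i}=(-1)^i$ and all other entries $0$. *)

theory Defs
  imports "Jordan_Normal_Form.Determinant" "Jordan_Normal_Form.DL_Submatrix"
begin

text \<open>Matrices are 0-indexed.  The paper's (1-indexed) form J on R^(4n-1) has
  J_{i,4n-i} = (-1)^i; in 0-indexed form entry (r, 4n-2-r) equals (-1)^(r+1).\<close>

definition Jform :: "nat \<Rightarrow> real mat" where
  "Jform n = mat (4*n - 1) (4*n - 1)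
     (\<lambda>(r, c). if r + c = 4*n - 2 then (-1) ^ (r + 1) else 0)"

definition SO_2n_2n1 :: "nat \<Rightarrow> real mat set" where
  "SO_2n_2n1 n = {M. M \<in> carrier_mat (4*n - 1) (4*n - 1) \<and>
                     transpose_mat M * Jform n * M = Jform n \<and> det M = 1}"

definition totally_positive :: "real mat \<Rightarrow> bool" where
  "totally_positive M \<longleftrightarrow>
     (\<forall>I K. I \<subseteq> {0..<dim_row M} \<longrightarrow> K \<subseteq> {0..<dim_col M} \<longrightarrow> I \<noteq> {} \<longrightarrow>
            card I = card K \<longrightarrow> det (submatrix M I K) > 0)"

end

theory Submission
  imports Defs
begin

lemma neg1_pow_double: "(-1::'a::ring_1)^(k+k) = 1"
  by (metis mult_2 power_mult power_minus1_even)

lemma det_col_single: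
  assumes A: "(A::'a::comm_ring_1 mat) \<in> carrier_mat n n" and i: "i<n" and j: "j<n"
  and z: "\<And>k. k<n \<Longrightarrow> k\<noteq>i \<Longrightarrow> A$$(k,j) = 0"
  shows "det A = A$$(i,j) * cofactor A i j"
proof -
  have "det A = (\<Sum>k<n. A$$(k,j) * cofactor A k j)" by (rule laplace_expansion_column[OF A j])
  also have "\<dots> = (\<Sum>k<n. if k = i then A$$(i,j) * cofactor A i j else 0)"
    by (rule sum.cong) (auto simp: z)
  also have "\<dots> = A$$(i,j) * cofactor A i j" using i by simp
  finally show ?thesis .
qed

lemma prod_two:
  assumes "finite S" "m \<in> S" "p \<in> S" "m \<noteq> p" "\<And>i. i\<in>S \<Longrightarrow> i\<noteq>m \<Longrightarrow> i\<noteq>p \<Longrightarrow> f i = 1"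
  shows "prod f S = f m * f p"
proof -
  have "prod f S = prod f {m,p}"
    by (rule prod.mono_neutral_right) (use assms in auto)
  thus ?thesis using assms by simp
qed

lemma perm_two:
  assumes s: "\<sigma> permutes {0..<n}" and m: "m<n" and p: "p<n" and mp: "m\<noteq>p"
    and h: "\<forall>i<n. \<sigma> i \<notin> {m,p} \<longrightarrow> \<sigma> i = i"
  shows "\<sigma> = id \<or> \<sigma> = Transposition.transpose m p"
proof -
  have inj: "inj \<sigma>" using permutes_inj[OF s] .
  have sm: "\<sigma> m \<in> {m,p}" using h m mp by (metis insertCI)
  have sp: "\<sigma> p \<in> {m,p}" using h p mp by (metis insertCI)
  have ne: "\<sigma> m \<noteq> \<sigma> p" using inj mp by (meson injD)
  have other: "\<sigma> j = j" if "j \<noteq> m" "j \<noteq> p" for j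
  proof (cases "j < n")
    case True
    have "\<sigma> j \<notin> {m,p}"
    proof
      assume "\<sigma> j \<in> {m,p}"
      then have "\<sigma> j = \<sigma> m \<or> \<sigma> j = \<sigma> p" using sm sp ne by auto
      then show False using inj that by (metis injD)
    qed
    then show ?thesis using h True by auto
  next
    case False
    then show ?thesis using permutes_not_in[OF s] by auto
  qed
  show ?thesis
  proof (cases "\<sigma> m = m")
    case True
    then have "\<sigma> p = p" using sp ne by auto
    then have "\<sigma> = id" using True other by (intro ext) (metis id_apply)
    then show ?thesis by simp
  next
    case False
    then have a: "\<sigma> m = p" using sm by auto
    then have b: "\<sigma> p = m" using sp ne by auto
    have "\<sigma> = Transposition.transpose m p"
      using a b other by (intro ext) (auto simp: Transposition.transpose_def)
    then show ?thesis by simp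
  qed
qed


lemma insert_index_inj: "insert_index m a = insert_index m b \<Longrightarrow> a = b"
  by (metis delete_insert_index)

lemma insert_index_ne: "insert_index m a \<noteq> m"
  unfolding insert_index_def by auto

lemma insert_index_lt: "a < n \<Longrightarrow> insert_index m a < Suc n"
  unfolding insert_index_def by auto

lemma delete_index_lt: "a < Suc n \<Longrightarrow> m < Suc n \<Longrightarrow> a \<noteq> m \<Longrightarrow> delete_index m a < n"
  unfolding delete_index_def by auto

lemma sylvester:
  fixes A :: "real mat"
  assumes A: "A \<in> carrier_mat n n" and m: "m<n" and p: "p<n" and mp: "m\<noteq>p" and d: "det A \<noteq> 0"
  shows "det A * det (mat_delete (mat_delete A m m) (delete_index m p) (delete_index m p))
     = det (mat_delete A m m) * det (mat_delete A p p) - det (mat_delete A m p) * det (mat_delete A p m)"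
proof -
  define C where "C = adj_mat A"
  have C: "C \<in> carrier_mat n n" and AC: "A * C = det A \<cdot>\<^sub>m 1\<^sub>m n"
    using adj_mat[OF A] unfolding C_def by auto
  define X where "X = mat n n (\<lambda>(i,j). if j = m then C$$(i,m) else if j = p then C$$(i,p) else if i = j then 1 else 0)"
  have X: "X \<in> carrier_mat n n" unfolding X_def by simp
  define Y where "Y = A * X"
  have Y: "Y \<in> carrier_mat n n" unfolding Y_def using A X by simp
  have colXm: "col X m = col C m" using C m unfolding X_def by (intro eq_vecI) auto
  have colXp: "col X p = col C p" using C p mp unfolding X_def by (intro eq_vecI) auto
  have colXo: "col X j = unit_vec n j" if "j<n" "j\<noteq>m" "j\<noteq>p" for j
    using that unfolding X_def by (intro eq_vecI) auto
  have Ym: "Y$$(i,m) = (if i = m then det A else 0)" if "i<n" for i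
  proof -
    have "Y$$(i,m) = row A i \<bullet> col C m" unfolding Y_def using A X that m colXm by simp
    also have "\<dots> = (A*C)$$(i,m)" using A C that m by simp
    finally show ?thesis unfolding AC using that m by simp
  qed
  have Yp: "Y$$(i,p) = (if i = p then det A else 0)" if "i<n" for i
  proof -
    have "Y$$(i,p) = row A i \<bullet> col C p" unfolding Y_def using A X that p colXp by simp
    also have "\<dots> = (A*C)$$(i,p)" using A C that p by simp
    finally show ?thesis unfolding AC using that p by simp
  qed
  have Yo: "Y$$(i,j) = A$$(i,j)" if "i<n" "j<n" "j\<noteq>m" "j\<noteq>p" for i j
  proof -
    have "Y$$(i,j) = row A i \<bullet> unit_vec n j" unfolding Y_def using A X that colXo by simp
    also have "\<dots> = A$$(i,j)" using A that by simp
    finally show ?thesis .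
  qed
  obtain n1 where n1: "n = Suc n1" using m by (cases n) auto
  define p' where "p' = delete_index m p"
  have p'lt: "p' < n1" unfolding p'_def using delete_index_lt[of p n1 m] m p mp n1 by auto
  have pp': "insert_index m p' = p" unfolding p'_def using insert_delete_index mp by metis
  obtain n2 where n2: "n1 = Suc n2" using p'lt by (cases n1) auto
  define Y1 where "Y1 = mat_delete Y m m"
  have Y1: "Y1 \<in> carrier_mat n1 n1" unfolding Y1_def using mat_delete_carrier[OF Y] n1 by simp
  have Y1idx: "Y1$$(a,b) = Y$$(insert_index m a, insert_index m b)" if "a<n1" "b<n1" for a b
    unfolding Y1_def using mat_delete_index[of Y n1 m m a b] Y n1 m that by simp
  have detY1: "det Y = det A * det Y1"
  proof -
    have "det Y = Y$$(m,m) * cofactor Y m m"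
      by (rule det_col_single[OF Y m m]) (simp add: Ym)
    thus ?thesis unfolding cofactor_def Y1_def using Ym[OF m] neg1_pow_double by simp
  qed
  have detY1': "det Y1 = det A * det (mat_delete Y1 p' p')"
  proof -
    have "det Y1 = Y1$$(p',p') * cofactor Y1 p' p'"
    proof (rule det_col_single[OF Y1 p'lt p'lt])
      fix k assume k: "k<n1" "k\<noteq>p'"
      have "insert_index m k \<noteq> p" using k pp' insert_index_inj by metis
      then show "Y1$$(k,p') = 0" using Y1idx[OF k(1) p'lt] pp' Yp insert_index_lt[OF k(1)] n1 by simp
    qed
    moreover have "Y1$$(p',p') = det A" using Y1idx[OF p'lt p'lt] pp' Yp p by simp
    ultimately show ?thesis unfolding cofactor_def using neg1_pow_double by simp
  qed
  have eqD: "mat_delete Y1 p' p' = mat_delete (mat_delete A m m) p' p'"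
  proof (rule eq_matI)
    fix a b assume ab: "a < dim_row (mat_delete (mat_delete A m m) p' p')" "b < dim_col (mat_delete (mat_delete A m m) p' p')"
    then have a: "a < n2" and b: "b < n2" using A n1 n2 by auto
    have A1: "mat_delete A m m \<in> carrier_mat n1 n1" using mat_delete_carrier[OF A] n1 by simp
    have "mat_delete Y1 p' p' $$ (a,b) = Y1 $$ (insert_index p' a, insert_index p' b)"
      using mat_delete_index[of Y1 n2 p' p' a b] Y1 n2 p'lt a b by simp
    also have "\<dots> = Y $$ (insert_index m (insert_index p' a), insert_index m (insert_index p' b))"
      using Y1idx insert_index_lt a b n2 by simp
    also have "\<dots> = A $$ (insert_index m (insert_index p' a), insert_index m (insert_index p' b))"
    proof (rule Yo)
      show "insert_index m (insert_index p' a) < n" "insert_index m (insert_index p' b) < n"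
        using insert_index_lt a b n1 n2 by auto
      show "insert_index m (insert_index p' b) \<noteq> m" by (rule insert_index_ne)
      show "insert_index m (insert_index p' b) \<noteq> p"
        using pp' insert_index_inj insert_index_ne by metis
    qed
    also have "\<dots> = mat_delete A m m $$ (insert_index p' a, insert_index p' b)"
      using mat_delete_index[of A n1 m m "insert_index p' a" "insert_index p' b"] A n1 m insert_index_lt a b n2 by simp
    also have "\<dots> = mat_delete (mat_delete A m m) p' p' $$ (a,b)"
      using mat_delete_index[of "mat_delete A m m" n2 p' p' a b] A1 n2 p'lt a b by simp
    finally show "mat_delete Y1 p' p' $$ (a,b) = mat_delete (mat_delete A m m) p' p' $$ (a,b)" .
  qed (use Y1 A n1 n2 in auto)
  have detX: "det X = C$$(m,m) * C$$(p,p) - C$$(m,p) * C$$(p,m)"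
  proof -
    let ?S = "{\<sigma>. \<sigma> permutes {0..<n}}"
    let ?g = "\<lambda>\<sigma>. of_int (sign \<sigma>) * (\<Prod>i=0..<n. X$$(i,\<sigma> i))"
    let ?t = "Transposition.transpose m p"
    have "det X = sum ?g ?S" by (rule det_def'[OF X])
    also have "\<dots> = sum ?g {id, ?t}"
    proof (rule sum.mono_neutral_right)
      show "finite ?S" by (simp add: finite_permutations)
      show "{id, ?t} \<subseteq> ?S" using m p by (auto intro: permutes_swap_id)
      show "\<forall>\<sigma>\<in>?S - {id, ?t}. ?g \<sigma> = 0"
      proof
        fix \<sigma> assume s: "\<sigma> \<in> ?S - {id, ?t}"
        have "\<not> (\<forall>i<n. \<sigma> i \<notin> {m,p} \<longrightarrow> \<sigma> i = i)" using perm_two[of \<sigma> n m p] s m p mp by auto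
        then obtain i where i: "i<n" "\<sigma> i \<notin> {m,p}" "\<sigma> i \<noteq> i" by auto
        have "\<sigma> i < n" using s i permutes_in_image[of \<sigma> "{0..<n}" i] by auto
        then have "X$$(i,\<sigma> i) = 0" using i unfolding X_def by auto
        then have "(\<Prod>i=0..<n. X$$(i,\<sigma> i)) = 0" using i(1) by (intro prod_zero) auto
        then show "?g \<sigma> = 0" by simp
      qed
    qed
    also have "\<dots> = ?g id + ?g ?t"
    proof -
      have "id \<noteq> ?t" using mp by (metis id_apply transpose_apply_first)
      then show ?thesis by simp
    qed
    also have "?g id = C$$(m,m) * C$$(p,p)"
    proof -
      have "(\<Prod>i=0..<n. X$$(i,id i)) = X$$(m, id m) * X$$(p, id p)"
        by (rule prod_two) (use m p mp in \<open>auto simp: X_def\<close>)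
      then show ?thesis using m p mp by (simp add: X_def)
    qed
    also have "?g ?t = - (C$$(m,p) * C$$(p,m))"
    proof -
      have "(\<Prod>i=0..<n. X$$(i,?t i)) = X$$(m, ?t m) * X$$(p, ?t p)"
        by (rule prod_two) (use m p mp in \<open>auto simp: X_def\<close>)
      then show ?thesis using m p mp by (simp add: X_def sign_swap_id)
    qed
    finally show ?thesis by simp
  qed
  have "det A * det X = det Y" unfolding Y_def using det_mult[OF A X] by simp
  also have "\<dots> = det A * (det A * det (mat_delete (mat_delete A m m) p' p'))"
    using detY1 detY1' eqD by simp
  finally have dX: "det X = det A * det (mat_delete (mat_delete A m m) p' p')" using d mult_left_cancel by blast
  have Cij: "C$$(i,j) = cofactor A j i" if "i<n" "j<n" for i j
    unfolding C_def adj_mat_def using A that by simp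
  have "C$$(m,p) * C$$(p,m) = det (mat_delete A m p) * det (mat_delete A p m)"
    using Cij m p unfolding cofactor_def by (simp add: ac_simps neg1_pow_double flip: power_add)
  moreover have "C$$(m,m) * C$$(p,p) = det (mat_delete A m m) * det (mat_delete A p p)"
    using Cij m p unfolding cofactor_def by (simp add: neg1_pow_double)
  ultimately show ?thesis using dX detX unfolding p'_def by simp
qed


definition subm :: "'a mat \<Rightarrow> (nat\<Rightarrow>nat) \<Rightarrow> (nat\<Rightarrow>nat) \<Rightarrow> nat \<Rightarrow> 'a mat" where
  "subm A f g k = mat k k (\<lambda>(i,j). A $$ (f i, g j))"

definition tp :: "nat \<Rightarrow> real mat \<Rightarrow> bool" where
  "tp N A \<longleftrightarrow> (\<forall>k f g. 0<k \<longrightarrow> strict_mono_on {..<k} f \<longrightarrow> strict_mono_on {..<k} g \<longrightarrow>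
      f ` {..<k} \<subseteq> {..<N} \<longrightarrow> g ` {..<k} \<subseteq> {..<N} \<longrightarrow> det (subm A f g k) > 0)"

lemma tp_det:
  assumes "tp N A" "A \<in> carrier_mat N N"
  shows "det A > 0"
proof (cases "N = 0")
  case True
  then show ?thesis using assms by simp
next
  case False
  have "subm A id id N = A" unfolding subm_def using assms(2) by (intro eq_matI) auto
  moreover have "det (subm A id id N) > 0" using assms(1) False unfolding tp_def
    by (auto simp: strict_mono_on_def)
  ultimately show ?thesis by simp
qed

lemma insert_index_mono: "a < b \<Longrightarrow> insert_index i a < insert_index i b"
  unfolding insert_index_def by auto

lemma tp_delete:
  assumes t: "tp (Suc N) A" and A: "A \<in> carrier_mat (Suc N) (Suc N)" and i: "i < Suc N" and j: "j < Suc N"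
  shows "tp N (mat_delete A i j)"
  unfolding tp_def
proof (intro allI impI)
  fix k :: nat and f g :: "nat \<Rightarrow> nat" assume k: "0 < k" and f: "strict_mono_on {..<k} f" and g: "strict_mono_on {..<k} g"
    and fr: "f ` {..<k} \<subseteq> {..<N}" and gr: "g ` {..<k} \<subseteq> {..<N}"
  have eq: "subm (mat_delete A i j) f g k = subm A (insert_index i \<circ> f) (insert_index j \<circ> g) k"
    unfolding subm_def
  proof (rule eq_matI)
    fix a b assume ab: "a < dim_row (mat k k (\<lambda>(a, b). A $$ ((insert_index i \<circ> f) a, (insert_index j \<circ> g) b)))"
      "b < dim_col (mat k k (\<lambda>(a, b). A $$ ((insert_index i \<circ> f) a, (insert_index j \<circ> g) b)))"
    then have "a < k" "b < k" by auto
    then have "f a < N" "g b < N" using fr gr by auto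
    then show "mat k k (\<lambda>(a, b). mat_delete A i j $$ (f a, g b)) $$ (a, b) =
          mat k k (\<lambda>(a, b). A $$ ((insert_index i \<circ> f) a, (insert_index j \<circ> g) b)) $$ (a, b)"
      using mat_delete_index[OF A i j, of "f a" "g b"] \<open>a<k\<close> \<open>b<k\<close> by simp
  qed auto
  have "strict_mono_on {..<k} (insert_index i \<circ> f)"
  proof (rule strict_mono_onI)
    fix a b assume "a \<in> {..<k}" "b \<in> {..<k}" "a < b"
    then have "f a < f b" using f by (simp add: strict_mono_onD)
    then show "(insert_index i \<circ> f) a < (insert_index i \<circ> f) b" by (simp add: insert_index_mono)
  qed
  moreover have "strict_mono_on {..<k} (insert_index j \<circ> g)"
  proof (rule strict_mono_onI)
    fix a b assume "a \<in> {..<k}" "b \<in> {..<k}" "a < b"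
    then have "g a < g b" using g by (simp add: strict_mono_onD)
    then show "(insert_index j \<circ> g) a < (insert_index j \<circ> g) b" by (simp add: insert_index_mono)
  qed
  moreover have "(insert_index i \<circ> f) ` {..<k} \<subseteq> {..<Suc N}"
  proof
    fix x assume "x \<in> (insert_index i \<circ> f) ` {..<k}"
    then obtain a where a: "a < k" "x = insert_index i (f a)" by auto
    then have "f a < N" using fr by auto
    then show "x \<in> {..<Suc N}" using a insert_index_lt by auto
  qed
  moreover have "(insert_index j \<circ> g) ` {..<k} \<subseteq> {..<Suc N}"
  proof
    fix x assume "x \<in> (insert_index j \<circ> g) ` {..<k}"
    then obtain a where a: "a < k" "x = insert_index j (g a)" by auto
    then have "g a < N" using gr by auto
    then show "x \<in> {..<Suc N}" using a insert_index_lt by auto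
  qed
  ultimately show "det (subm (mat_delete A i j) f g k) > 0" unfolding eq using t k unfolding tp_def by blast
qed

lemma kotel:
  assumes "A \<in> carrier_mat N N" "tp N A" "m < N"
  shows "det A \<le> A$$(m,m) * det (mat_delete A m m)"
  using assms
proof (induction N arbitrary: A m)
  case 0
  then show ?case by simp
next
  case (Suc N)
  note A = Suc.prems(1) and t = Suc.prems(2) and m = Suc.prems(3)
  show ?case
  proof (cases "N = 0")
    case True
    then have m0: "m = 0" using m by simp
    have "det A = A$$(m,m) * cofactor A m m"
      by (rule det_col_single[OF A m m]) (use m True in auto)
    then show ?thesis unfolding cofactor_def using neg1_pow_double by simp
  next
    case False
    define p where "p = (if m = 0 then 1 else (0::nat))"
    have p: "p < Suc N" and mp: "m \<noteq> p" using False unfolding p_def by auto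
    define B where "B = mat_delete A p p"
    have B: "B \<in> carrier_mat N N" unfolding B_def using mat_delete_carrier[OF A] by simp
    have tB: "tp N B" unfolding B_def by (rule tp_delete[OF t A p p])
    define m' where "m' = delete_index p m"
    have m'lt: "m' < N" unfolding m'_def using delete_index_lt[of m N p] m p mp by auto
    have mm': "insert_index p m' = m" unfolding m'_def using insert_delete_index mp by metis
    have IH: "det B \<le> B$$(m',m') * det (mat_delete B m' m')" by (rule Suc.IH[OF B tB m'lt])
    have Bmm: "B$$(m',m') = A$$(m,m)" unfolding B_def
      using mat_delete_index[OF A p p m'lt m'lt] mm' by simp
    obtain N' where N': "N = Suc N'" using False by (cases N) auto
    have D: "det (mat_delete B m' m') > 0"
      by (rule tp_det[OF tp_delete]) (use B tB m'lt N' mat_delete_carrier[OF B] in auto)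
    have dA: "det A > 0" by (rule tp_det[OF t A])
    have dAm: "det (mat_delete A m m) > 0"
      by (rule tp_det[OF tp_delete[OF t A m m]]) (use mat_delete_carrier[OF A] in auto)
    have d1: "det (mat_delete A p m) > 0"
      by (rule tp_det[OF tp_delete[OF t A p m]]) (use mat_delete_carrier[OF A] in auto)
    have d2: "det (mat_delete A m p) > 0"
      by (rule tp_det[OF tp_delete[OF t A m p]]) (use mat_delete_carrier[OF A] in auto)
    have syl: "det A * det (mat_delete B m' m') = det B * det (mat_delete A m m) - det (mat_delete A p m) * det (mat_delete A m p)"
      unfolding B_def m'_def using sylvester[OF A p m mp[symmetric]] dA by simp
    have "det A * det (mat_delete B m' m') < det B * det (mat_delete A m m)"
      using syl d1 d2 by (simp add: mult_pos_pos)
    also have "\<dots> \<le> (A$$(m,m) * det (mat_delete A m m)) * det (mat_delete B m' m')"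
      using mult_right_mono[OF IH less_imp_le[OF dAm]] Bmm by (simp add: ac_simps)
    finally have "det A * det (mat_delete B m' m') < (A$$(m,m) * det (mat_delete A m m)) * det (mat_delete B m' m')" .
    then show ?thesis using D by (simp add: mult_less_cancel_right)
  qed
qed


lemma pick_image:
  assumes f: "strict_mono_on {..<k} f" and i: "i < k"
  shows "pick (f ` {..<k}) i = f i"
  using i
proof (induction i)
  case 0
  show ?case unfolding pick.simps
  proof (rule Least_equality)
    show "f 0 \<in> f ` {..<k}" using 0 by auto
    fix y assume "y \<in> f ` {..<k}"
    then obtain j where j: "j < k" "y = f j" by auto
    show "f 0 \<le> y"
    proof (cases "j = 0")
      case False
      then show ?thesis using j 0 f by (auto simp: strict_mono_on_def intro: less_imp_le)
    qed (use j in simp)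
  qed
next
  case (Suc i)
  then have IH: "pick (f ` {..<k}) i = f i" by simp
  show ?case unfolding pick.simps IH
  proof (rule Least_equality)
    show "f (Suc i) \<in> f ` {..<k} \<and> f i < f (Suc i)" using Suc.prems f by (auto simp: strict_mono_on_def)
    fix y assume "y \<in> f ` {..<k} \<and> f i < y"
    then obtain j where j: "j < k" "y = f j" "f i < f j" by auto
    have "\<not> j \<le> i"
    proof
      assume "j \<le> i"
      then have "f j \<le> f i"
      proof (cases "j = i")
        case False
        then have "j < i" using \<open>j \<le> i\<close> by simp
        then show ?thesis using strict_mono_onD[OF f, of j i] j Suc.prems by simp
      qed simp
      then show False using j by simp
    qed
    then have "Suc i \<le> j" by simp
    then show "f (Suc i) \<le> y" using f j Suc.prems
      by (cases "Suc i = j") (auto simp: strict_mono_on_def intro: less_imp_le)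
  qed
qed

lemma tp_of_totally_positive:
  assumes A: "A \<in> carrier_mat N N" and t: "totally_positive A"
  shows "tp N A"
  unfolding tp_def
proof (intro allI impI)
  fix k :: nat and f g :: "nat \<Rightarrow> nat" assume k: "0 < k" and f: "strict_mono_on {..<k} f" and g: "strict_mono_on {..<k} g"
    and fr: "f ` {..<k} \<subseteq> {..<N}" and gr: "g ` {..<k} \<subseteq> {..<N}"
  define I where "I = f ` {..<k}"
  define K where "K = g ` {..<k}"
  have cI: "card I = k" unfolding I_def using strict_mono_on_imp_inj_on[OF f] by (simp add: card_image)
  have cK: "card K = k" unfolding K_def using strict_mono_on_imp_inj_on[OF g] by (simp add: card_image)
  have I1: "{i. i < dim_row A \<and> i \<in> I} = I" using fr A unfolding I_def by auto
  have K1: "{i. i < dim_col A \<and> i \<in> K} = K" using gr A unfolding K_def by auto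
  have eq: "submatrix A I K = subm A f g k"
    unfolding submatrix_def subm_def I1 K1 cI cK
    using pick_image[OF f] pick_image[OF g] unfolding I_def K_def by (intro eq_matI) auto
  have "I \<subseteq> {0..<dim_row A}" "K \<subseteq> {0..<dim_col A}" "I \<noteq> {}" "card I = card K"
    using fr gr A k cI cK unfolding I_def K_def by auto
  then have "det (submatrix A I K) > 0"
    using t unfolding totally_positive_def by blast
  then show "det (subm A f g k) > 0" using eq by simp
qed

lemma Jform_index:
  assumes "i < 4*n-1" "k < 4*n-1"
  shows "Jform n $$ (i,k) = (if i + k = 4*n-2 then (-1)^(i+1) else 0)"
  unfolding Jform_def using assms by simp

lemma Jform_carrier: "Jform n \<in> carrier_mat (4*n-1) (4*n-1)"
  unfolding Jform_def by simp

theorem lemma4p7: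
  fixes n :: nat and M :: "real mat"
  assumes "n \<ge> 1"
    and "M \<in> SO_2n_2n1 n"
    and "totally_positive M"
  shows "M $$ (2*n - 1, 2*n - 1) \<ge> 1"
proof -
  define N where "N = 4*n-1"
  define m where "m = 2*n-1"
  define J where "J = Jform n"
  have M: "M \<in> carrier_mat N N" and MJ: "transpose_mat M * J * M = J" and dM: "det M = 1"
    using assms(2) unfolding SO_2n_2n1_def N_def J_def by auto
  have J: "J \<in> carrier_mat N N" unfolding J_def N_def by (rule Jform_carrier)
  have m: "m < N" unfolding m_def N_def using assms(1) by simp
  define C where "C = adj_mat M"
  have C: "C \<in> carrier_mat N N" and MC: "M * C = 1\<^sub>m N"
    using adj_mat[OF M] dM unfolding C_def by auto
  have "transpose_mat M * J = transpose_mat M * J * (M * C)"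
    using M J by (simp add: MC)
  also have "\<dots> = (transpose_mat M * J * M) * C"
    using M J C by (simp add: assoc_mult_mat[of _ N N _ N _ N])
  also have "\<dots> = J * C" using MJ by simp
  finally have eq: "transpose_mat M * J = J * C" .
  have mk: "m + k = 4*n-2 \<longleftrightarrow> k = m" for k unfolding m_def using assms(1) by arith
  have km: "k + m = 4*n-2 \<longleftrightarrow> k = m" for k unfolding m_def using assms(1) by arith
  have s1: "(-1::real)^(m+1) = 1"
  proof -
    have "m + 1 = n + n" unfolding m_def using assms(1) by arith
    then show ?thesis using neg1_pow_double by metis
  qed
  have Jrow: "J$$(m,k) = (if k = m then 1 else 0)" if "k < N" for k
    using Jform_index[of m n k] that m mk[of k] s1 unfolding J_def N_def by simp
  have Jcol: "J$$(k,m) = (if k = m then 1 else 0)" if "k < N" for k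
    using Jform_index[of k n m] that m km[of k] s1 unfolding J_def N_def by simp
  have l: "(transpose_mat M * J)$$(m,m) = M$$(m,m)"
  proof -
    have "(transpose_mat M * J)$$(m,m) = (\<Sum>k<N. M$$(k,m) * J$$(k,m))"
      using M J m by (simp add: scalar_prod_def atLeast0LessThan)
    also have "\<dots> = (\<Sum>k<N. if k = m then M$$(m,m) else 0)"
      by (rule sum.cong) (auto simp: Jcol)
    finally show ?thesis using m by simp
  qed
  have r: "(J * C)$$(m,m) = C$$(m,m)"
  proof -
    have "(J * C)$$(m,m) = (\<Sum>k<N. J$$(m,k) * C$$(k,m))"
      using C J m by (simp add: scalar_prod_def atLeast0LessThan)
    also have "\<dots> = (\<Sum>k<N. if k = m then C$$(m,m) else 0)"
      by (rule sum.cong) (auto simp: Jrow)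
    finally show ?thesis using m by simp
  qed
  have Cmm: "C$$(m,m) = det (mat_delete M m m)"
    unfolding C_def adj_mat_def cofactor_def using M m neg1_pow_double by simp
  have Mmm: "M$$(m,m) = det (mat_delete M m m)" using eq l r Cmm by simp
  have t: "tp N M" by (rule tp_of_totally_positive[OF M assms(3)])
  obtain N' where N': "N = Suc N'" using m by (cases N) auto
  have tD: "tp N' (mat_delete M m m)" using tp_delete[of N' M m m] t M m N' by simp
  have cD: "mat_delete M m m \<in> carrier_mat N' N'" using mat_delete_carrier[OF M] N' by simp
  have pos: "det (mat_delete M m m) > 0" by (rule tp_det[OF tD cD])
  have "det M \<le> M$$(m,m) * det (mat_delete M m m)" by (rule kotel[OF M t m])
  then have "1 \<le> M$$(m,m) * M$$(m,m)" using dM Mmm by simp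
  moreover have "M$$(m,m) > 0" using pos Mmm by simp
  have "1 \<le> M$$(m,m)"
  proof (rule ccontr)
    assume "\<not> 1 \<le> M$$(m,m)"
    then have "M$$(m,m) < 1" by simp
    then have "M$$(m,m) * M$$(m,m) < 1 * 1"
      using mult_strict_mono[of "M$$(m,m)" 1 "M$$(m,m)" 1] \<open>M$$(m,m) > 0\<close> by simp
    then show False using \<open>1 \<le> M$$(m,m) * M$$(m,m)\<close> by simp
  qed
  then show ?thesis unfolding m_def .
qed

end
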